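(* Let $\mathcal G$ be a countably infinite set, $k$ an even positive integer and $\pi\in\mathcal B_{k/2}$. Then there exists a $\pi$-adopted sequence $G(\pi)=(G_1,\dots,G_k)\in\mathcal G^k$, and it is unique up to equivalence: any two $\pi$-adopted sequences are equivalent. Moreover $\#\{G_1,\dots,G_k\}=\frac k2+1$.
   Context: A pair-partition of $\{1,\dots,k\}$ is a partition all of whose blocks have exactly two elements; it is crossing if there exist $1\le a<b<c<d\le k$ with $\{a,c\},\{b,d\}\in\pi$, and non-crossing otherwise. For even $k$, $\mathcal B_{k/2}$ denotes the set of non-crossing pair-partitions of $\{1,\dots,k\}$. For $k\ge 4$, $\pi\in\mathcal B_{k/2}$ and a block $\{m,m+1\}\in\pi$ with $1\le m\le k-2$, $\pi\setminus^\bullet\{m,m+1\}\in\mathcal B_{k/2-1}$ denotes the pair-partition of $\{1,\dots,k-2\}$ obtained by deleting the block $\{m,m+1\}$ and relabelling every remaining element $a>m$ as $a-2$. $\pi$-adopted sequences. Let $\mathcal G$ be a countable set and $\pi\in\mathcal B_{k/2}$. A sequence $g=(g_1,\dots,g_k)\in\mathcal G^k$ is $\pi$-adopted, defined recursively in $k$, as follows. For $k=2$ (so $\pi=\{\{1,2\}\}$), $g$ is $\pi$-adopted iff $g_1\neq g_2$. For $k\ge 4$, $g$ is $\pi$-adopted iff for every block of $\pi$ of the form $\{m,m+1\}$ with $1\le m\le k-2$: (a) $g_m=g_{m+2}$ and $g_{m+1}\neq g_s$ for all $s\neq m+1$; and (b) the sequence $(g_1,\dots,g_m,g_{m+3},\dots,g_k)\in\mathcal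 G^{k-2}$, obtained by deleting $g_{m+1}$ and $g_{m+2}$, is $\pi\setminus^\bullet\{m,m+1\}$-adopted. Two sequences $g,h\in\mathcal G^k$ are equivalent if there is a bijection $\sigma:\mathcal G\to\mathcal G$ with $\sigma(g_i)=h_i$ for all $i$. *)

theory Defs
  imports Main "HOL-Library.Disjoint_Sets" "HOL-Library.Countable_Set"
begin

definition pair_partition :: "nat \<Rightarrow> nat set set \<Rightarrow> bool" where
  "pair_partition k \<pi> \<longleftrightarrow> partition_on {1..k} \<pi> \<and> (\<forall>B\<in>\<pi>. card B = 2)"

definition crossing :: "nat set set \<Rightarrow> bool" where
  "crossing \<pi> \<longleftrightarrow> (\<exists>a b c d. 1 \<le> a \<and> a < b \<and> b < c \<and> c < d \<and>
                     {a, c} \<in> \<pi> \<and> {b, d} \<in> \<pi>)"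

definition NCPP :: "nat \<Rightarrow> nat set set set" where
  "NCPP k = {\<pi>. pair_partition k \<pi> \<and> \<not> crossing \<pi>}"

definition del_block :: "nat set set \<Rightarrow> nat \<Rightarrow> nat set set" where
  "del_block \<pi> m = (\<lambda>B. (\<lambda>a. if a > m then a - 2 else a) ` B) ` (\<pi> - {{m, m + 1}})"

text \<open>Sequences (g_1,...,g_k) are modelled as functions nat => 'a; only the values on {1..k} matter.\<close>
function adopted :: "nat \<Rightarrow> nat set set \<Rightarrow> (nat \<Rightarrow> 'a) \<Rightarrow> bool" where
  "adopted k \<pi> g =
    (if k = 2 then g 1 \<noteq> g 2
     else if 4 \<le> k then
       (\<forall>m. 1 \<le> m \<and> m \<le> k - 2 \<and> {m, m + 1} \<in> \<pi> \<longrightarrow>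
          (g m = g (m + 2) \<and> (\<forall>s\<in>{1..k}. s \<noteq> m + 1 \<longrightarrow> g (m + 1) \<noteq> g s)) \<and>
          adopted (k - 2) (del_block \<pi> m) (\<lambda>i. if i \<le> m then g i else g (i + 2)))
     else False)"
  by pat_completeness auto
termination
  by (relation "measure (\<lambda>(k, _, _). k)") auto

definition equiv_seq :: "'a set \<Rightarrow> nat \<Rightarrow> (nat \<Rightarrow> 'a) \<Rightarrow> (nat \<Rightarrow> 'a) \<Rightarrow> bool" where
  "equiv_seq G k g h \<longleftrightarrow> (\<exists>\<sigma>. bij_betw \<sigma> G G \<and> (\<forall>i\<in>{1..k}. \<sigma> (g i) = h i))"

end

theory Submission
  imports Defs "HOL-Library.Countable_Set"
begin

declare adopted.simps[simp del]

definition rl :: "nat \<Rightarrow> nat \<Rightarrow> nat" where "rl m a = (if a > m then a - 2 else a)"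
definition ps :: "nat \<Rightarrow> nat \<Rightarrow> nat" where "ps m i = (if i \<le> m then i else i + 2)"

definition KK :: "nat set set \<Rightarrow> nat \<Rightarrow> nat \<Rightarrow> bool" where
 "KK \<pi> i j \<longleftrightarrow> (\<forall>B\<in>\<pi>. B \<subseteq> {min i j..<max i j} \<or> B \<inter> {min i j..<max i j} = {})"

definition kern :: "nat \<Rightarrow> nat set set \<Rightarrow> (nat \<Rightarrow> 'a) \<Rightarrow> bool" where
 "kern k \<pi> g \<longleftrightarrow> (\<forall>i\<in>{1..k}. \<forall>j\<in>{1..k}. (g i = g j) = KK \<pi> i j)"

lemma KK_refl: "KK \<pi> i i" by (simp add: KK_def)
lemma KK_sym: "KK \<pi> i j = KK \<pi> j i" by (simp add: KK_def min.commute max.commute)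

lemma NCPP_sub: "\<pi> \<in> NCPP k \<Longrightarrow> B \<in> \<pi> \<Longrightarrow> B \<subseteq> {1..k}"
  unfolding NCPP_def pair_partition_def partition_on_def by auto

lemma NCPP_two: "\<pi> \<in> NCPP k \<Longrightarrow> B \<in> \<pi> \<Longrightarrow> \<exists>a b. a < b \<and> B = {a,b}"
proof -
  assume "\<pi> \<in> NCPP k" "B \<in> \<pi>"
  then have "card B = 2" unfolding NCPP_def pair_partition_def by auto
  then obtain x y where "B = {x,y}" "x \<noteq> y" by (auto simp: card_2_iff)
  then show ?thesis by (metis insert_commute linorder_neqE_nat)
qed

lemma NCPP_disj: "\<pi> \<in> NCPP k \<Longrightarrow> B1 \<in> \<pi> \<Longrightarrow> B2 \<in> \<pi> \<Longrightarrow> x \<in> B1 \<Longrightarrow> x \<in> B2 \<Longrightarrow> B1 = B2"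
proof -
  assume a: "\<pi> \<in> NCPP k" "B1 \<in> \<pi>" "B2 \<in> \<pi>" "x \<in> B1" "x \<in> B2"
  then have d: "disjoint \<pi>" unfolding NCPP_def pair_partition_def partition_on_def by simp
  show "B1 = B2"
  proof (rule ccontr)
    assume "B1 \<noteq> B2"
    then have "B1 \<inter> B2 = {}" using disjointD[OF d a(2) a(3)] by simp
    then show False using a(4,5) by blast
  qed
qed

lemma NCPP_cover: "\<pi> \<in> NCPP k \<Longrightarrow> x \<in> {1..k} \<Longrightarrow> \<exists>B\<in>\<pi>. x \<in> B"
  unfolding NCPP_def pair_partition_def partition_on_def by auto

lemma NCPP_nc: "\<pi> \<in> NCPP k \<Longrightarrow> {a,c} \<in> \<pi> \<Longrightarrow> {b,d} \<in> \<pi> \<Longrightarrow> 1 \<le> a \<Longrightarrow> a<b \<Longrightarrow> b<c \<Longrightarrow> c<d \<Longrightarrow> False"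
  unfolding NCPP_def crossing_def by blast

lemma block_of:
  assumes "\<pi> \<in> NCPP k" "x \<in> {1..k}"
  obtains a b where "a < b" "{a,b} \<in> \<pi>" "x = a \<or> x = b" "1 \<le> a" "b \<le> k"
proof -
  obtain B where B: "B \<in> \<pi>" "x \<in> B" using NCPP_cover[OF assms] by blast
  obtain a b where ab: "a < b" "B = {a,b}" using NCPP_two[OF assms(1) B(1)] by blast
  have "B \<subseteq> {1..k}" using NCPP_sub[OF assms(1) B(1)] .
  then show ?thesis using that ab B by auto
qed

lemma adj_exists:
  assumes "\<pi> \<in> NCPP k" "4 \<le> k"
  shows "\<exists>m. 1 \<le> m \<and> m \<le> k-2 \<and> {m,m+1} \<in> \<pi>"
proof -
  define P where "P = (\<lambda>(a::nat,b::nat). {a,b} \<in> \<pi> \<and> a < b \<and> b \<le> k - 1)"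
  have ex: "\<exists>p. P p"
  proof -
    obtain a b where ab: "a < b" "{a,b} \<in> \<pi>" "1 = a \<or> 1 = b" "1 \<le> a" "b \<le> k"
      using block_of[OF assms(1), of 1] assms(2) by auto
    show ?thesis
    proof (cases "b = k")
      case False then show ?thesis using ab by (intro exI[of _ "(a,b)"]) (auto simp: P_def)
    next
      case True
      obtain c d where cd: "c < d" "{c,d} \<in> \<pi>" "2 = c \<or> 2 = d" "1 \<le> c" "d \<le> k"
        using block_of[OF assms(1), of 2] assms(2) by auto
      have c2: "2 \<in> {c,d}" using cd(3) by blast
      have "a = 1" using ab(1,3,4) by linarith
      then have "2 \<notin> {a,b}" using True assms(2) by simp
      then have "{c,d} \<noteq> {a,b}" using c2 by metis
      then have "d \<noteq> k" using NCPP_disj[OF assms(1) ab(2) cd(2), of k] True by auto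
      then show ?thesis using cd by (intro exI[of _ "(c,d)"]) (auto simp: P_def)
    qed
  qed
  obtain p where p: "P p" and pmin: "\<forall>q. P q \<longrightarrow> (case p of (a,b) \<Rightarrow> b - a) \<le> (case q of (a,b) \<Rightarrow> b - a)"
    using ex_has_least_nat[of P _ "\<lambda>(a,b). b - a"] ex by blast
  obtain a b where pab: "p = (a,b)" by (cases p)
  have ab: "{a,b} \<in> \<pi>" "a < b" "b \<le> k - 1" using p pab by (auto simp: P_def)
  have a1: "1 \<le> a" using NCPP_sub[OF assms(1) ab(1)] by auto
  show ?thesis
  proof (cases "b = a + 1")
    case True then show ?thesis using ab a1 by auto
  next
    case False
    then have lt: "a + 1 < b" using ab by auto
    have "a+1 \<in> {1..k}" using lt ab by auto
    then obtain c d where cd: "c < d" "{c,d} \<in> \<pi>" "a+1 = c \<or> a+1 = d" "1 \<le> c" "d \<le> k"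
      by (rule block_of[OF assms(1)])
    have a1c: "a+1 \<in> {c,d}" using cd(3) by blast
    have "a+1 \<notin> {a,b}" using lt by simp
    then have ne: "{c,d} \<noteq> {a,b}" using a1c by metis
    have nab: "a \<notin> {c,d}" "b \<notin> {c,d}" using NCPP_disj[OF assms(1) ab(1) cd(2)] ne by auto
    show ?thesis
    proof (cases "a < c \<and> d < b")
      case True
      then have "P (c,d)" using cd ab by (auto simp: P_def)
      then have "b - a \<le> d - c" using pmin pab by fastforce
      then show ?thesis using True cd(1) by arith
    next
      case False
      show ?thesis
      proof (cases "a + 1 = c")
        case True
        then have "b < d" using False nab cd by auto
        then show ?thesis using NCPP_nc[OF assms(1) ab(1) cd(2)] a1 True lt by auto
      next
        case False2: False
        then have "a+1 = d" using cd by auto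
        then have "c < a" using cd nab by auto
        then show ?thesis using NCPP_nc[OF assms(1) cd(2) ab(1)] cd \<open>a+1 = d\<close> lt by auto
      qed
    qed
  qed
qed

lemma del_block_rl: "del_block \<pi> m = (\<lambda>B. rl m ` B) ` (\<pi> - {{m,m+1}})"
  by (simp add: del_block_def rl_def[abs_def])

lemma not_in_block:
  assumes "\<pi> \<in> NCPP k" "{m,m+1} \<in> \<pi>" "B \<in> \<pi>" "B \<noteq> {m,m+1}"
  shows "m \<notin> B" "m+1 \<notin> B"
  using NCPP_disj[OF assms(1) assms(2) assms(3)] assms(4) by auto

lemma rl_mem:
  assumes "a \<noteq> m" "a \<noteq> m+1" "i \<noteq> m+1" "j \<noteq> m+1"
  shows "(a \<in> {min i j..<max i j}) = (rl m a \<in> {min (rl m i) (rl m j)..<max (rl m i) (rl m j)})"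
  using assms unfolding rl_def min_def max_def by auto

lemma ball_minus: "P X \<Longrightarrow> (\<forall>B\<in>A. P B) = (\<forall>B\<in>A-{X}. P B)" by auto
lemma ball_img: "(\<forall>y\<in>f`A. Q y) = (\<forall>x\<in>A. Q (f x))" by auto

lemma KK_del:
  assumes "\<pi> \<in> NCPP k" "{m,m+1} \<in> \<pi>" "i \<noteq> m+1" "j \<noteq> m+1"
  shows "KK \<pi> i j = KK (del_block \<pi> m) (rl m i) (rl m j)"
proof -
  define S where "S = {min i j..<max i j}"
  define S' where "S' = {min (rl m i) (rl m j)..<max (rl m i) (rl m j)}"
  have blk: "{m,m+1} \<subseteq> S \<or> {m,m+1} \<inter> S = {}"
    using assms(3,4) unfolding S_def min_def max_def by auto
  have eq: "(B \<subseteq> S \<or> B \<inter> S = {}) = (rl m ` B \<subseteq> S' \<or> rl m ` B \<inter> S' = {})"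
    if "B \<in> \<pi> - {{m,m+1}}" for B
  proof -
    have pt: "\<forall>a\<in>B. (a \<in> S) = (rl m a \<in> S')"
    proof
      fix a assume "a \<in> B"
      then have "a \<noteq> m" "a \<noteq> m+1" using not_in_block[OF assms(1,2), of B] that by auto
      then show "(a \<in> S) = (rl m a \<in> S')" using rl_mem[OF _ _ assms(3,4)] unfolding S_def S'_def by blast
    qed
    then show ?thesis by blast
  qed
  have "KK \<pi> i j = (\<forall>B\<in>\<pi> - {{m,m+1}}. B \<subseteq> S \<or> B \<inter> S = {})"
    unfolding KK_def S_def[symmetric] by (rule ball_minus[where P="\<lambda>B. B \<subseteq> S \<or> B \<inter> S = {}", OF blk])
  also have "\<dots> = (\<forall>B\<in>\<pi> - {{m,m+1}}. rl m ` B \<subseteq> S' \<or> rl m ` B \<inter> S' = {})"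
    by (intro ball_cong refl eq)
  also have "\<dots> = KK (del_block \<pi> m) (rl m i) (rl m j)"
    unfolding KK_def S'_def[symmetric] del_block_rl ball_img ..
  finally show ?thesis .
qed

lemma KK_mid:
  assumes "{m,m+1} \<in> \<pi>" "j \<noteq> m+1"
  shows "\<not> KK \<pi> (m+1) j"
proof
  assume "KK \<pi> (m+1) j"
  then have *: "{m,m+1} \<subseteq> {min (m+1) j..<max (m+1) j} \<or> {m,m+1} \<inter> {min (m+1) j..<max (m+1) j} = {}"
    unfolding KK_def using assms(1) by (rule bspec)
  have "(m \<in> {min (m+1) j..<max (m+1) j}) \<noteq> (m+1 \<in> {min (m+1) j..<max (m+1) j})"
  proof (cases "j < m+1")
    case True
    then have "min (m+1) j = j" "max (m+1) j = m+1" by auto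
    then show ?thesis using True by simp
  next
    case False
    then have "min (m+1) j = m+1" "max (m+1) j = j" by auto
    then show ?thesis using False assms(2) by simp
  qed
  moreover have "m \<in> {min (m+1) j..<max (m+1) j} \<and> m+1 \<in> {min (m+1) j..<max (m+1) j} \<or>
     m \<notin> {min (m+1) j..<max (m+1) j} \<and> m+1 \<notin> {min (m+1) j..<max (m+1) j}"
    using * by (metis disjoint_iff insert_subset insertCI)
  ultimately show False by blast
qed


definition ps2 :: "nat \<Rightarrow> nat \<Rightarrow> nat" where "ps2 m i = (if i < m then i else i + 2)"
lemma rl_ps[simp]: "rl m (ps m i) = i" by (simp add: rl_def ps_def)
lemma rl_ps2[simp]: "rl m (ps2 m i) = i" by (simp add: rl_def ps2_def)
lemma ps_range: "i \<in> {1..k-2} \<Longrightarrow> m \<le> k - 2 \<Longrightarrow> ps m i \<in> {1..k}" by (auto simp: ps_def)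
lemma ps2_range: "i \<in> {1..k-2} \<Longrightarrow> m \<le> k - 2 \<Longrightarrow> ps2 m i \<in> {1..k}" by (auto simp: ps2_def)
lemma ps_ne: "ps m i \<noteq> m+1" by (auto simp: ps_def)
lemma ps2_ne: "ps2 m i \<noteq> m+1" "ps2 m i \<noteq> m" by (auto simp: ps2_def)
lemma rl_range: "i \<in> {1..k} \<Longrightarrow> i \<noteq> m+1 \<Longrightarrow> 1 \<le> m \<Longrightarrow> m \<le> k-2 \<Longrightarrow> rl m i \<in> {1..k-2}"
  by (auto simp: rl_def)
lemma ps_mono: "a < b \<Longrightarrow> ps2 m a < ps2 m b" by (auto simp: ps2_def)
lemma ps_rl: "a \<noteq> m \<Longrightarrow> a \<noteq> m+1 \<Longrightarrow> ps2 m (rl m a) = a" by (auto simp: ps2_def rl_def)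
lemma gps: "(\<lambda>i. if i \<le> m then g i else g (i+2)) = (\<lambda>i. g (ps m i))"
  by (auto simp: ps_def)

lemma NCPP_del:
  assumes "\<pi> \<in> NCPP k" "{m,m+1} \<in> \<pi>" "1 \<le> m" "m \<le> k-2"
  shows "del_block \<pi> m \<in> NCPP (k-2)"
proof -
  define D where "D = {a. a \<noteq> m \<and> a \<noteq> m+1}"
  have injD: "inj_on (rl m) D" unfolding inj_on_def D_def rl_def by auto
  have sub: "B \<subseteq> {1..k} \<inter> D" if "B \<in> \<pi> - {{m,m+1}}" for B
    using NCPP_sub[OF assms(1)] not_in_block[OF assms(1,2)] that unfolding D_def by blast
  have img: "ps2 m ` rl m ` B = B" if "B \<subseteq> D" for B
  proof -
    have "ps2 m ` rl m ` B = (\<lambda>a. ps2 m (rl m a)) ` B" by (simp add: image_image)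
    also have "\<dots> = (\<lambda>a. a) ` B" by (rule image_cong) (use that ps_rl in \<open>auto simp: D_def\<close>)
    finally show ?thesis by simp
  qed
  let ?\<pi>' = "del_block \<pi> m"
  have un: "\<Union>?\<pi>' = {1..k-2}"
  proof
    show "\<Union>?\<pi>' \<subseteq> {1..k-2}"
    proof
      fix x assume "x \<in> \<Union>?\<pi>'"
      then obtain B a where B: "B \<in> \<pi> - {{m,m+1}}" "a \<in> B" "x = rl m a"
        unfolding del_block_rl by auto
      then have "a \<in> {1..k}" "a \<noteq> m+1" using sub[OF B(1)] unfolding D_def by auto
      then show "x \<in> {1..k-2}" using rl_range assms(3,4) B(3) by blast
    qed
  next
    show "{1..k-2} \<subseteq> \<Union>?\<pi>'"
    proof
      fix i assume i: "i \<in> {1..k-2}"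
      then have pi: "ps2 m i \<in> {1..k}" using ps2_range assms(4) by blast
      obtain B where B: "B \<in> \<pi>" "ps2 m i \<in> B" using NCPP_cover[OF assms(1) pi] by blast
      have "B \<noteq> {m,m+1}" using B(2) ps2_ne[of m i] by auto
      then have "rl m ` B \<in> ?\<pi>'" using B(1) unfolding del_block_rl by blast
      moreover have "i \<in> rl m ` B" using B(2) rl_ps2[of m i] by (metis imageI)
      ultimately show "i \<in> \<Union>?\<pi>'" by blast
    qed
  qed
  have dis: "disjoint ?\<pi>'"
  proof (rule disjointI)
    fix X Y assume X: "X \<in> ?\<pi>'" and Y: "Y \<in> ?\<pi>'" and XY: "X \<noteq> Y"
    obtain B1 where B1: "B1 \<in> \<pi> - {{m,m+1}}" "X = rl m ` B1" using X unfolding del_block_rl by blast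
    obtain B2 where B2: "B2 \<in> \<pi> - {{m,m+1}}" "Y = rl m ` B2" using Y unfolding del_block_rl by blast
    have "B1 \<noteq> B2" using XY B1 B2 by blast
    then have "B1 \<inter> B2 = {}" using NCPP_disj[OF assms(1), of B1 B2] B1(1) B2(1) by blast
    moreover have "rl m ` B1 \<inter> rl m ` B2 = rl m ` (B1 \<inter> B2)"
      using inj_on_image_Int[OF injD] sub[OF B1(1)] sub[OF B2(1)] by blast
    ultimately show "X \<inter> Y = {}" using B1 B2 by simp
  qed
  have cards: "card X = 2" if X: "X \<in> ?\<pi>'" for X
  proof -
    obtain B where B: "B \<in> \<pi> - {{m,m+1}}" "X = rl m ` B" using X unfolding del_block_rl by blast
    have "card B = 2" using assms(1) B(1) unfolding NCPP_def pair_partition_def by auto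
    moreover have "inj_on (rl m) B" using inj_on_subset[OF injD] sub[OF B(1)] by blast
    ultimately show ?thesis using B(2) by (simp add: card_image)
  qed
  have ne: "{} \<notin> ?\<pi>'"
  proof
    assume "{} \<in> ?\<pi>'" then have "card ({}::nat set) = 2" by (rule cards)
    then show False by simp
  qed
  have nc: "\<not> crossing ?\<pi>'"
  proof
    assume "crossing ?\<pi>'"
    then obtain a b c d where abcd: "1 \<le> a" "a < b" "b < c" "c < d" "{a,c} \<in> ?\<pi>'" "{b,d} \<in> ?\<pi>'"
      unfolding crossing_def by blast
    obtain B1 where B1: "B1 \<in> \<pi> - {{m,m+1}}" "{a,c} = rl m ` B1" using abcd(5) unfolding del_block_rl by blast
    obtain B2 where B2: "B2 \<in> \<pi> - {{m,m+1}}" "{b,d} = rl m ` B2" using abcd(6) unfolding del_block_rl by blast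
    have "B1 = ps2 m ` {a,c}" using img[of B1] sub[OF B1(1)] B1(2) by auto
    then have e1: "{ps2 m a, ps2 m c} \<in> \<pi>" using B1(1) by simp
    have "B2 = ps2 m ` {b,d}" using img[of B2] sub[OF B2(1)] B2(2) by auto
    then have e2: "{ps2 m b, ps2 m d} \<in> \<pi>" using B2(1) by simp
    have "1 \<le> ps2 m a" using abcd(1) by (simp add: ps2_def)
    then show False using NCPP_nc[OF assms(1) e1 e2] ps_mono abcd(2,3,4) by blast
  qed
  show ?thesis unfolding NCPP_def pair_partition_def partition_on_def
    using un dis ne cards nc by blast
qed


lemma kern_eq: "kern k \<pi> g \<Longrightarrow> i \<in> {1..k} \<Longrightarrow> j \<in> {1..k} \<Longrightarrow> (g i = g j) = KK \<pi> i j"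
  unfolding kern_def by blast

lemma step:
  assumes P: "\<pi> \<in> NCPP k" and k4: "4 \<le> k" and blk: "{m,m+1} \<in> \<pi>" and m1: "1 \<le> m" and mk: "m \<le> k-2"
  shows "kern k \<pi> g \<longleftrightarrow> (g m = g (m+2) \<and> (\<forall>s\<in>{1..k}. s \<noteq> m+1 \<longrightarrow> g (m+1) \<noteq> g s)
           \<and> kern (k-2) (del_block \<pi> m) (\<lambda>i. if i \<le> m then g i else g (i+2)))"
    (is "_ \<longleftrightarrow> ?R")
proof
  assume K: "kern k \<pi> g"
  have mm: "m \<in> {1..k}" "m+2 \<in> {1..k}" using m1 mk k4 by auto
  have "KK \<pi> m (m+2) = KK (del_block \<pi> m) (rl m m) (rl m (m+2))"
    by (rule KK_del[OF P blk]) auto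
  also have "\<dots> = True" by (simp add: rl_def KK_refl)
  finally have a: "g m = g (m+2)" using kern_eq[OF K mm] by simp
  have b: "\<forall>s\<in>{1..k}. s \<noteq> m+1 \<longrightarrow> g (m+1) \<noteq> g s"
  proof (intro ballI impI)
    fix s assume s: "s \<in> {1..k}" "s \<noteq> m+1"
    have "m+1 \<in> {1..k}" using mk k4 by auto
    then show "g (m+1) \<noteq> g s" using kern_eq[OF K _ s(1)] KK_mid[OF blk s(2)] by blast
  qed
  have c: "kern (k-2) (del_block \<pi> m) (\<lambda>i. g (ps m i))"
    unfolding kern_def
  proof (intro ballI)
    fix i j assume i: "i \<in> {1..k-2}" and j: "j \<in> {1..k-2}"
    have "(g (ps m i) = g (ps m j)) = KK \<pi> (ps m i) (ps m j)"
      using kern_eq[OF K ps_range[OF i mk] ps_range[OF j mk]] .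
    also have "\<dots> = KK (del_block \<pi> m) (rl m (ps m i)) (rl m (ps m j))"
      using KK_del[OF P blk ps_ne ps_ne] .
    finally show "(g (ps m i) = g (ps m j)) = KK (del_block \<pi> m) i j" by simp
  qed
  show ?R using a b c unfolding ps_def by (simp add: if_distrib)
next
  assume R: ?R
  then have a: "g m = g (m+2)" and b: "\<forall>s\<in>{1..k}. s \<noteq> m+1 \<longrightarrow> g (m+1) \<noteq> g s"
    and c0: "kern (k-2) (del_block \<pi> m) (\<lambda>i. if i \<le> m then g i else g (i+2))" by auto
  have c: "kern (k-2) (del_block \<pi> m) (\<lambda>i. g (ps m i))"
    using c0 unfolding ps_def by (simp add: if_distrib)
  have key: "g i = g (ps m (rl m i))" if ne: "i \<noteq> m+1" for i
  proof -
    consider "i \<le> m" | "i = m+2" | "i > m+2" using ne by linarith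
    then show ?thesis
    proof cases
      case 1 then show ?thesis by (simp add: ps_def rl_def)
    next
      case 2 then show ?thesis using a by (simp add: ps_def rl_def)
    next
      case 3 then have "rl m i = i - 2" "i - 2 > m" by (auto simp: rl_def)
      moreover have "Suc (Suc (i - 2)) = i" using 3 by arith
    ultimately show ?thesis by (simp add: ps_def)
    qed
  qed
  show "kern k \<pi> g" unfolding kern_def
  proof (intro ballI)
    fix i j assume i: "i \<in> {1..k}" and j: "j \<in> {1..k}"
    show "(g i = g j) = KK \<pi> i j"
    proof (cases "i = m+1")
      case True
      show ?thesis
      proof (cases "j = m+1")
        case True then show ?thesis using \<open>i = m+1\<close> by (simp add: KK_refl)
      next
        case False then show ?thesis using \<open>i = m+1\<close> b j KK_mid[OF blk False] by auto
      qed
    next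
      case False
      show ?thesis
      proof (cases "j = m+1")
        case True then show ?thesis using False b i KK_mid[OF blk False] KK_sym[of \<pi> i j] by auto
      next
        case Fj: False
        have ri: "rl m i \<in> {1..k-2}" using rl_range[OF i False m1 mk] .
        have rj: "rl m j \<in> {1..k-2}" using rl_range[OF j Fj m1 mk] .
        have "(g i = g j) = (g (ps m (rl m i)) = g (ps m (rl m j)))" using key False Fj by simp
        also have "\<dots> = KK (del_block \<pi> m) (rl m i) (rl m j)"
          using kern_eq[OF c ri rj] by simp
        also have "\<dots> = KK \<pi> i j" using KK_del[OF P blk False Fj] by simp
        finally show ?thesis .
      qed
    qed
  qed
qed

lemma kern2:
  assumes "\<pi> \<in> NCPP 2"
  shows "kern 2 \<pi> g \<longleftrightarrow> g 1 \<noteq> g 2"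
proof -
  obtain a b where ab: "a < b" "{a,b} \<in> \<pi>" "1 = a \<or> 1 = b" "1 \<le> a" "b \<le> 2"
    using block_of[OF assms, of 1] by auto
  then have "a = 1" "b = 1+1" by auto
  then have blk: "{1, 1+1} \<in> \<pi>" using ab(2) by simp
  have "\<not> KK \<pi> (1+1) 1" using KK_mid[OF blk, of 1] by simp
  then have "\<not> KK \<pi> 2 1" unfolding one_add_one .
  then have n12: "\<not> KK \<pi> 1 2" using KK_sym[of \<pi> 1 2] by simp
  have "{1..2::nat} = {1,2}" by auto
  then show ?thesis unfolding kern_def using n12 KK_refl[of \<pi>] KK_sym[of \<pi> 2 1] by auto
qed

lemma char:
  "even k \<Longrightarrow> 0 < k \<Longrightarrow> \<pi> \<in> NCPP k \<Longrightarrow> adopted k \<pi> g = kern k \<pi> g"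
proof (induction k arbitrary: \<pi> g rule: less_induct)
  case (less k)
  show ?case
  proof (cases "k = 2")
    case True
    have "adopted 2 \<pi> g = (g 1 \<noteq> g 2)" by (subst adopted.simps) simp
    then show ?thesis using kern2[OF less.prems(3)[unfolded True], of g] True by simp
  next
    case False
    then have k4: "4 \<le> k" using less.prems(1,2) by presburger
    have ad: "adopted k \<pi> g = (\<forall>m. 1 \<le> m \<and> m \<le> k - 2 \<and> {m, m + 1} \<in> \<pi> \<longrightarrow>
          (g m = g (m + 2) \<and> (\<forall>s\<in>{1..k}. s \<noteq> m + 1 \<longrightarrow> g (m + 1) \<noteq> g s)) \<and>
          adopted (k - 2) (del_block \<pi> m) (\<lambda>i. if i \<le> m then g i else g (i + 2)))"
      using False k4 by (subst adopted.simps) simp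
    also have "\<dots> = (\<forall>m. 1 \<le> m \<and> m \<le> k - 2 \<and> {m, m + 1} \<in> \<pi> \<longrightarrow> kern k \<pi> g)"
    proof (intro all_cong1 imp_cong refl)
      fix m assume m: "1 \<le> m \<and> m \<le> k - 2 \<and> {m, m + 1} \<in> \<pi>"
      have P': "del_block \<pi> m \<in> NCPP (k-2)" using NCPP_del[OF less.prems(3)] m by blast
      have "adopted (k - 2) (del_block \<pi> m) (\<lambda>i. if i \<le> m then g i else g (i + 2))
          = kern (k - 2) (del_block \<pi> m) (\<lambda>i. if i \<le> m then g i else g (i + 2))"
        using less.IH[of "k-2", OF _ _ _ P'] less.prems(1) k4 by simp
      then show "((g m = g (m + 2) \<and> (\<forall>s\<in>{1..k}. s \<noteq> m + 1 \<longrightarrow> g (m + 1) \<noteq> g s)) \<and>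
          adopted (k - 2) (del_block \<pi> m) (\<lambda>i. if i \<le> m then g i else g (i + 2))) = kern k \<pi> g"
        using step[OF less.prems(3) k4, of m g] m by simp
    qed
    also have "\<dots> = kern k \<pi> g" using adj_exists[OF less.prems(3) k4] by blast
    finally show ?thesis .
  qed
qed

lemma key_lemma:
  assumes a: "g m = g (m+2)" and ne: "i \<noteq> m+1"
  shows "g i = g (ps m (rl m i))"
proof -
  consider "i \<le> m" | "i = m+2" | "i > m+2" using ne by linarith
  then show ?thesis
  proof cases
    case 1 then show ?thesis by (simp add: ps_def rl_def)
  next
    case 2 then show ?thesis using a by (simp add: ps_def rl_def)
  next
    case 3 then have "rl m i = i - 2" "i - 2 > m" by (auto simp: rl_def)
    moreover have "Suc (Suc (i - 2)) = i" using 3 by arith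
    ultimately show ?thesis by (simp add: ps_def)
  qed
qed

lemma card_kern:
  "even k \<Longrightarrow> 0 < k \<Longrightarrow> \<pi> \<in> NCPP k \<Longrightarrow> kern k \<pi> g \<Longrightarrow> card (g ` {1..k}) = k div 2 + 1"
proof (induction k arbitrary: \<pi> g rule: less_induct)
  case (less k)
  show ?case
  proof (cases "k = 2")
    case True
    then have "g 1 \<noteq> g 2" using kern2[OF less.prems(3)[unfolded True], of g] less.prems(4) by simp
    moreover have "{1..2::nat} = {1,2}" by auto
    ultimately show ?thesis using True by simp
  next
    case False
    then have k4: "4 \<le> k" using less.prems(1,2) by presburger
    obtain m where m: "1 \<le> m" "m \<le> k-2" "{m,m+1} \<in> \<pi>" using adj_exists[OF less.prems(3) k4] by blast
    have P': "del_block \<pi> m \<in> NCPP (k-2)" using NCPP_del[OF less.prems(3) m(3,1,2)] .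
    define g' where "g' = (\<lambda>i. if i \<le> m then g i else g (i+2))"
    have R: "g m = g (m+2)" "\<forall>s\<in>{1..k}. s \<noteq> m+1 \<longrightarrow> g (m+1) \<noteq> g s" "kern (k-2) (del_block \<pi> m) g'"
      using step[OF less.prems(3) k4 m(3,1,2), of g] less.prems(4) unfolding g'_def by auto
    have IH: "card (g' ` {1..k-2}) = (k-2) div 2 + 1"
      using less.IH[of "k-2", OF _ _ _ P' R(3)] less.prems(1) k4 by simp
    have g'ps: "g' i = g (ps m i)" for i unfolding g'_def ps_def by simp
    have eq: "g ` {1..k} = insert (g (m+1)) (g' ` {1..k-2})"
    proof
      show "g ` {1..k} \<subseteq> insert (g (m+1)) (g' ` {1..k-2})"
      proof
        fix x assume "x \<in> g ` {1..k}"
        then obtain i where i: "i \<in> {1..k}" "x = g i" by blast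
        show "x \<in> insert (g (m+1)) (g' ` {1..k-2})"
        proof (cases "i = m+1")
          case True then show ?thesis using i by simp
        next
          case False
          have "g i = g' (rl m i)" using key_lemma[OF R(1) False] g'ps by simp
          moreover have "rl m i \<in> {1..k-2}" using rl_range[OF i(1) False m(1,2)] .
          ultimately show ?thesis using i by blast
        qed
      qed
    next
      show "insert (g (m+1)) (g' ` {1..k-2}) \<subseteq> g ` {1..k}"
      proof
        fix x assume "x \<in> insert (g (m+1)) (g' ` {1..k-2})"
        then show "x \<in> g ` {1..k}"
        proof
          assume "x = g (m+1)" then show ?thesis using m k4 by auto
        next
          assume "x \<in> g' ` {1..k-2}"
          then obtain j where "j \<in> {1..k-2}" "x = g (ps m j)" using g'ps by auto
          then show ?thesis using ps_range[of j k m] m(2) by blast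
        qed
      qed
    qed
    have notin: "g (m+1) \<notin> g' ` {1..k-2}"
    proof
      assume "g (m+1) \<in> g' ` {1..k-2}"
      then obtain j where j: "j \<in> {1..k-2}" "g (m+1) = g (ps m j)" using g'ps by auto
      then show False using R(2) ps_range[OF j(1) m(2)] ps_ne[of m j] by blast
    qed
    have "card (g ` {1..k}) = card (g' ` {1..k-2}) + 1"
      unfolding eq using notin by simp
    then show ?thesis using IH less.prems(1) k4 by presburger
  qed
qed

lemma exist_kern:
  "infinite G \<Longrightarrow> even k \<Longrightarrow> 0 < k \<Longrightarrow> \<pi> \<in> NCPP k \<Longrightarrow> \<exists>g. (\<forall>i\<in>{1..k}. g i \<in> G) \<and> kern k \<pi> g"
proof (induction k arbitrary: \<pi> rule: less_induct)
  case (less k)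
  show ?case
  proof (cases "k = 2")
    case True
    obtain x where x: "x \<in> G" using less.prems(1) infinite_imp_nonempty by blast
    have "infinite (G - {x})" using less.prems(1) by simp
    then obtain y where y: "y \<in> G - {x}" using infinite_imp_nonempty by blast
    define g where "g = (\<lambda>i::nat. if i = 1 then x else y)"
    have "g 1 \<noteq> g 2" using y unfolding g_def by auto
    then have "kern 2 \<pi> g" using kern2[OF less.prems(4)[unfolded True], of g] by simp
    moreover have "\<forall>i\<in>{1..k}. g i \<in> G" using x y unfolding g_def by auto
    ultimately show ?thesis using True by blast
  next
    case False
    then have k4: "4 \<le> k" using less.prems(2,3) by presburger
    obtain m where m: "1 \<le> m" "m \<le> k-2" "{m,m+1} \<in> \<pi>" using adj_exists[OF less.prems(4) k4] by blast
    have P': "del_block \<pi> m \<in> NCPP (k-2)" using NCPP_del[OF less.prems(4) m(3,1,2)] .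
    obtain g' where g': "\<forall>i\<in>{1..k-2}. g' i \<in> G" "kern (k-2) (del_block \<pi> m) g'"
      using less.IH[of "k-2", OF _ less.prems(1) _ _ P'] less.prems(2) k4 by auto
    have "infinite (G - g' ` {1..k-2})" using less.prems(1) by (simp add: Diff_infinite_finite)
    then obtain x where x: "x \<in> G" "x \<notin> g' ` {1..k-2}" using infinite_imp_nonempty by blast
    define g where "g = (\<lambda>i. if i \<le> m then g' i else if i = m+1 then x else g' (i-2))"
    have gi: "g i = g' (rl m i)" if "i \<noteq> m+1" for i using that unfolding g_def rl_def by auto
    have "(\<lambda>i. if i \<le> m then g i else g (i+2)) = g'" unfolding g_def by auto
    moreover have "g m = g (m+2)" unfolding g_def by simp
    moreover have "\<forall>s\<in>{1..k}. s \<noteq> m+1 \<longrightarrow> g (m+1) \<noteq> g s"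
    proof (intro ballI impI)
      fix s assume s: "s \<in> {1..k}" "s \<noteq> m+1"
      have "g s \<in> g' ` {1..k-2}" using gi[OF s(2)] rl_range[OF s m(1,2)] by simp
      moreover have "g (m+1) = x" unfolding g_def by simp
      ultimately show "g (m+1) \<noteq> g s" using x(2) by metis
    qed
    ultimately have "kern k \<pi> g" using step[OF less.prems(4) k4 m(3,1,2), of g] g'(2) by simp
    moreover have "\<forall>i\<in>{1..k}. g i \<in> G"
    proof
      fix i assume i: "i \<in> {1..k}"
      show "g i \<in> G"
      proof (cases "i = m+1")
        case True then show ?thesis using x unfolding g_def by simp
      next
        case False then show ?thesis using gi[OF False] rl_range[OF i False m(1,2)] g'(1) by simp
      qed
    qed
    ultimately show ?thesis by blast
  qed
qed

lemma uniq:
  assumes G: "countable G" "infinite G"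
    and g: "\<forall>i\<in>{1..k}. g i \<in> G" and h: "\<forall>i\<in>{1..k}. h i \<in> G"
    and same: "\<And>i j. i \<in> {1..k} \<Longrightarrow> j \<in> {1..k} \<Longrightarrow> (g i = g j) = (h i = h j)"
  shows "equiv_seq G k g h"
proof -
  define I where "I = {1..k}"
  define A where "A = g ` I"
  define B where "B = h ` I"
  define f where "f = (\<lambda>x. h (inv_into I g x))"
  have fg: "f (g i) = h i" if "i \<in> I" for i
  proof -
    have "inv_into I g (g i) \<in> I" using that by (simp add: inv_into_into)
    moreover have "g (inv_into I g (g i)) = g i" using that by (simp add: f_inv_into_f)
    ultimately show ?thesis unfolding f_def using same that unfolding I_def by blast
  qed
  have bf: "bij_betw f A B"
    unfolding bij_betw_def
  proof
    show "inj_on f A"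
    proof (rule inj_onI)
      fix x y assume "x \<in> A" "y \<in> A" "f x = f y"
      then obtain i j where "i \<in> I" "j \<in> I" "x = g i" "y = g j" "h i = h j"
        unfolding A_def using fg by auto
      then show "x = y" using same unfolding I_def by blast
    qed
    show "f ` A = B" unfolding A_def B_def using fg by (auto simp: image_iff)
  qed
  have AG: "A \<subseteq> G" "B \<subseteq> G" using g h unfolding A_def B_def I_def by auto
  have fin: "finite A" "finite B" unfolding A_def B_def I_def by auto
  have "countable (G - A)" "infinite (G - A)" using G fin by (auto simp: Diff_infinite_finite)
  then obtain e1 :: "'a \<Rightarrow> nat" where e1: "bij_betw e1 (G - A) UNIV" by (rule countableE_infinite)
  have "countable (G - B)" "infinite (G - B)" using G fin by (auto simp: Diff_infinite_finite)
  then obtain e2 :: "'a \<Rightarrow> nat" where e2: "bij_betw e2 (G - B) UNIV" by (rule countableE_infinite)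
  define \<tau> where "\<tau> = inv_into (G - B) e2 \<circ> e1"
  have bt: "bij_betw \<tau> (G - A) (G - B)" unfolding \<tau>_def
    using bij_betw_trans[OF e1 bij_betw_inv_into[OF e2]] .
  define \<sigma> where "\<sigma> = (\<lambda>x. if x \<in> A then f x else \<tau> x)"
  have b1: "bij_betw \<sigma> A B" using bf by (rule bij_betw_cong[THEN iffD1, rotated]) (simp add: \<sigma>_def)
  have b2: "bij_betw \<sigma> (G - A) (G - B)" using bt by (rule bij_betw_cong[THEN iffD1, rotated]) (simp add: \<sigma>_def)
  have "bij_betw \<sigma> (A \<union> (G - A)) (B \<union> (G - B))" by (rule bij_betw_combine[OF b1 b2]) blast
  moreover have "A \<union> (G - A) = G" "B \<union> (G - B) = G" using AG by auto
  ultimately have "bij_betw \<sigma> G G" by simp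
  moreover have "\<forall>i\<in>{1..k}. \<sigma> (g i) = h i" using fg unfolding \<sigma>_def A_def I_def by auto
  ultimately show ?thesis unfolding equiv_seq_def by blast
qed

theorem mainTheorem3:
  fixes G :: "'a set" and k :: nat and \<pi> :: "nat set set"
  assumes "countable G" and "infinite G"
    and "even k" and "0 < k"
    and "\<pi> \<in> NCPP k"
  shows "(\<exists>g. (\<forall>i\<in>{1..k}. g i \<in> G) \<and> adopted k \<pi> g)
       \<and> (\<forall>g h. (\<forall>i\<in>{1..k}. g i \<in> G) \<and> (\<forall>i\<in>{1..k}. h i \<in> G)
                 \<and> adopted k \<pi> g \<and> adopted k \<pi> h \<longrightarrow> equiv_seq G k g h)
       \<and> (\<forall>g. (\<forall>i\<in>{1..k}. g i \<in> G) \<and> adopted k \<pi> g \<longrightarrow> card (g ` {1..k}) = k div 2 + 1)"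
proof (intro conjI allI impI)
  show "\<exists>g. (\<forall>i\<in>{1..k}. g i \<in> G) \<and> adopted k \<pi> g"
    using exist_kern[OF assms(2-5)] char[OF assms(3-5)] by blast
next
  fix g h :: "nat \<Rightarrow> 'a"
  assume H: "(\<forall>i\<in>{1..k}. g i \<in> G) \<and> (\<forall>i\<in>{1..k}. h i \<in> G) \<and> adopted k \<pi> g \<and> adopted k \<pi> h"
  then have kg: "kern k \<pi> g" and kh: "kern k \<pi> h" using char[OF assms(3-5)] by auto
  show "equiv_seq G k g h"
    by (rule uniq[OF assms(1,2)]) (use H kern_eq[OF kg] kern_eq[OF kh] in auto)
next
  fix g :: "nat \<Rightarrow> 'a"
  assume "(\<forall>i\<in>{1..k}. g i \<in> G) \<and> adopted k \<pi> g"
  then have "kern k \<pi> g" using char[OF assms(3-5)] by auto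
  then show "card (g ` {1..k}) = k div 2 + 1" using card_kern[OF assms(3-5)] by blast
qed

end
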